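(* Let $d \geq 0$, let $\mathcal{H}$ be a $(d+1)$-dimensional complex Hilbert space, and let $(\ket{x})_{x \in X}$ be an orthonormal basis of $\mathcal{H}$; call the associated classical structure (the special commutative $\dagger$-Frobenius algebra whose comultiplication copies the basis, $\ket{x} \mapsto \ket{x}\otimes\ket{x}$) the $X$ structure, and the basis vectors the $X$-classical points. Let $\mathbb{G} = (X,\oplus,0)$ be a finite abelian group structure on $X$ (so of order $d+1$), and let $\mathbb{S}$ be a finite consistent system of $\mathbb{G}$-valued $\mathbb{Z}$-module equations $$\bigoplus_{r=1}^{M} n^s_r\, y_r = a^s, \qquad s = 1,\dots,S,$$ with $n^s_r \in \mathbb{Z}$ and $a^s \in \mathbb{G}$, which has no solution in $\mathbb{G}$. Then there exists a quasi-special commutative $\dagger$-Frobenius algebra $Z$ on $\mathcal{H}$ (the $Z$ structure) such that: (i) the $X$ and $Z$ structures are strongly complementary, so that the $X$-classical points form a subgroup $K$ of the abelian group $P$ of $Z$-phases; (ii) the subgroup $K$ of $X$-classical points is isomorphic to $\mathbb{G}$; (iii) the system $\mathbb{S}$ (with its constants $a^s$ regarded as elements of $K \leq P$ via this isomorphism) admits a solution $(y_r := \beta_r)_{r=1}^M$ in the group $P$ of $Z$-phases.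
   Context: A system $\bigoplus_{r=1}^{M} n^s_r y_r = a^s$ ($s=1,\dots,S$) of $\mathbb{Z}$-module equations valued in an abelian group $K$ is consistent if, writing $\underline{n}^s = (n^s_1,\dots,n^s_M) \in \mathbb{Z}^M$, for every $J \geq 1$, indices $s_1,\dots,s_J$ and integers $c_1,\dots,c_J$: $\sum_j c_j \underline{n}^{s_j} = \underline{0}$ in $\mathbb{Z}^M$ implies $\bigoplus_j c_j a^{s_j} = 0$ in $K$. If $K \leq P$, a solution in $P$ is a family $(\beta_r)_{r=1}^M$ of elements of $P$ satisfying all equations with $y_r := \beta_r$. A quasi-special commutative $\dagger$-Frobenius algebra on $\mathcal{H}$ consists of a commutative associative unital multiplication $\mu_Z:\mathcal{H}\otimes\mathcal{H}\to\mathcal{H}$ with unit state $\eta_Z$, satisfying the Frobenius law with respect to its adjoint $\mu_Z^\dagger$, and such that $\mu_Z \circ \mu_Z^\dagger$ is a non-zero scalar multiple of the identity. A phase state (a $Z$-phase) is a state $\ket{\psi}$ with $(\bra{\psi}\otimes \mathrm{id}_{\mathcal{H}})\circ \mu_Z^\dagger \circ \ket{\psi} = \eta_Z$; the $Z$-phases form an abelian group $P$ under $(\psi,\phi)\mapsto \mu_Z(\ket{\psi}\otimes\ket{\phi})$ with unit $\eta_Z$ (states identified up to global phase). The $X$ and $Z$ structures are strongly complementary if the multiplication/unit of $Z$ and the comultiplication/counit of $X$ satisfy the bialgebra laws (up to scalars); in that case the $X$-classical points are $Z$-phases and form a subgroup of $P$. *)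

theory Defs
  imports Complex_Main "HOL-Algebra.Algebra"
begin

text \<open>The Hilbert space H is modelled as the space of functions 'x \<Rightarrow> complex
  over a finite type 'x (dimension d+1 = CARD('x)), with the standard inner product,
  so that the kets of the elements of 'x form the orthonormal basis defining the
  X structure.  Two- and three-fold tensor products are functions on 'x \<times> 'x
  and 'x \<times> 'x \<times> 'x.  A multiplication mu_Z : H\<otimes>H \<rightarrow> H is given by its structure
  constants m a b c (the c-component of mu_Z applied to the ket of (a,b)); its
  adjoint (comultiplication) has the complex-conjugated constants.\<close>

definition ket :: "'x \<Rightarrow> 'x \<Rightarrow> complex" where
  "ket x = (\<lambda>y. if y = x then 1 else 0)"

definition tensor :: "('x \<Rightarrow> complex) \<Rightarrow> ('x \<Rightarrow> complex) \<Rightarrow> ('x \<times> 'x \<Rightarrow> complex)" where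
  "tensor \<psi> \<phi> = (\<lambda>(a, b). \<psi> a * \<phi> b)"

definition mu :: "('x::finite \<Rightarrow> 'x \<Rightarrow> 'x \<Rightarrow> complex) \<Rightarrow> ('x \<times> 'x \<Rightarrow> complex) \<Rightarrow> ('x \<Rightarrow> complex)" where
  "mu m v = (\<lambda>c. \<Sum>a\<in>UNIV. \<Sum>b\<in>UNIV. m a b c * v (a, b))"

definition comu :: "('x::finite \<Rightarrow> 'x \<Rightarrow> 'x \<Rightarrow> complex) \<Rightarrow> ('x \<Rightarrow> complex) \<Rightarrow> ('x \<times> 'x \<Rightarrow> complex)" where
  "comu m v = (\<lambda>(a, b). \<Sum>c\<in>UNIV. cnj (m a b c) * v c)"

text \<open>mu tensor id, id tensor mu on H\<otimes>(H\<otimes>H) (bracketing a,(b,c))\<close>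
definition mu_left :: "('x::finite \<Rightarrow> 'x \<Rightarrow> 'x \<Rightarrow> complex) \<Rightarrow> ('x \<times> 'x \<times> 'x \<Rightarrow> complex) \<Rightarrow> ('x \<times> 'x \<Rightarrow> complex)" where
  "mu_left m w = (\<lambda>(e, c). \<Sum>a\<in>UNIV. \<Sum>b\<in>UNIV. m a b e * w (a, b, c))"

definition mu_right :: "('x::finite \<Rightarrow> 'x \<Rightarrow> 'x \<Rightarrow> complex) \<Rightarrow> ('x \<times> 'x \<times> 'x \<Rightarrow> complex) \<Rightarrow> ('x \<times> 'x \<Rightarrow> complex)" where
  "mu_right m w = (\<lambda>(a, e). \<Sum>b\<in>UNIV. \<Sum>c\<in>UNIV. m b c e * w (a, b, c))"

text \<open>mu-dagger tensor id and id tensor mu-dagger\<close>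
definition comu_left :: "('x::finite \<Rightarrow> 'x \<Rightarrow> 'x \<Rightarrow> complex) \<Rightarrow> ('x \<times> 'x \<Rightarrow> complex) \<Rightarrow> ('x \<times> 'x \<times> 'x \<Rightarrow> complex)" where
  "comu_left m v = (\<lambda>(a, b, c). \<Sum>e\<in>UNIV. cnj (m a b e) * v (e, c))"

definition comu_right :: "('x::finite \<Rightarrow> 'x \<Rightarrow> 'x \<Rightarrow> complex) \<Rightarrow> ('x \<times> 'x \<Rightarrow> complex) \<Rightarrow> ('x \<times> 'x \<times> 'x \<Rightarrow> complex)" where
  "comu_right m v = (\<lambda>(a, b, c). \<Sum>e\<in>UNIV. cnj (m b c e) * v (a, e))"

definition swap2 :: "('x \<times> 'x \<Rightarrow> complex) \<Rightarrow> ('x \<times> 'x \<Rightarrow> complex)" where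
  "swap2 v = (\<lambda>(a, b). v (b, a))"

definition qs_comm_dagger_frobenius ::
  "('x::finite \<Rightarrow> 'x \<Rightarrow> 'x \<Rightarrow> complex) \<Rightarrow> ('x \<Rightarrow> complex) \<Rightarrow> bool" where
  "qs_comm_dagger_frobenius m \<eta> \<longleftrightarrow>
     (\<forall>v. mu m (swap2 v) = mu m v) \<and>
     (\<forall>w. mu m (mu_left m w) = mu m (mu_right m w)) \<and>
     (\<forall>\<psi>. mu m (tensor \<eta> \<psi>) = \<psi>) \<and>
     (\<forall>\<psi>. mu m (tensor \<psi> \<eta>) = \<psi>) \<and>
     (\<forall>v. mu_left m (comu_right m v) = comu m (mu m v)) \<and>
     (\<forall>v. mu_right m (comu_left m v) = comu m (mu m v)) \<and>
     (\<exists>k::complex. k \<noteq> 0 \<and> (\<forall>\<psi>. mu m (comu m \<psi>) = (\<lambda>x. k * \<psi> x)))"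

text \<open>Z-phase: (bra psi \<otimes> id) o mu-dagger o ket psi = eta.\<close>
definition is_phase :: "('x::finite \<Rightarrow> 'x \<Rightarrow> 'x \<Rightarrow> complex) \<Rightarrow> ('x \<Rightarrow> complex) \<Rightarrow> ('x \<Rightarrow> complex) \<Rightarrow> bool" where
  "is_phase m \<eta> \<psi> \<longleftrightarrow> (\<lambda>b. \<Sum>a\<in>UNIV. cnj (\<psi> a) * comu m \<psi> (a, b)) = \<eta>"

text \<open>States up to global phase.\<close>
definition phase_class :: "('x \<Rightarrow> complex) \<Rightarrow> ('x \<Rightarrow> complex) set" where
  "phase_class \<psi> = {(\<lambda>x. c * \<psi> x) | c. cmod c = 1}"

definition phase_group :: "('x::finite \<Rightarrow> 'x \<Rightarrow> 'x \<Rightarrow> complex) \<Rightarrow> ('x \<Rightarrow> complex) \<Rightarrow> ('x \<Rightarrow> complex) set monoid" where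
  "phase_group m \<eta> =
     \<lparr> carrier = phase_class ` {\<psi>. is_phase m \<eta> \<psi>},
       monoid.mult = (\<lambda>A B. phase_class (mu m (tensor (SOME \<psi>. \<psi> \<in> A) (SOME \<phi>. \<phi> \<in> B)))),
       one = phase_class \<eta> \<rparr>"

definition deltaX :: "('x::finite \<Rightarrow> complex) \<Rightarrow> ('x \<times> 'x \<Rightarrow> complex)" where
  "deltaX v = (\<lambda>(a, b). if a = b then v a else 0)"

definition epsX :: "('x::finite \<Rightarrow> complex) \<Rightarrow> complex" where
  "epsX v = (\<Sum>a\<in>UNIV. v a)"

text \<open>(mu \<otimes> mu) o (id \<otimes> sigma \<otimes> id) o (deltaX \<otimes> deltaX), which sends the ket of (a,b)
  to mu(ket(a,b)) \<otimes> mu(ket(a,b)), extended linearly.\<close>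
definition bialg_rhs :: "('x::finite \<Rightarrow> 'x \<Rightarrow> 'x \<Rightarrow> complex) \<Rightarrow> ('x \<times> 'x \<Rightarrow> complex) \<Rightarrow> ('x \<times> 'x \<Rightarrow> complex)" where
  "bialg_rhs m v = (\<lambda>(c, c'). \<Sum>a\<in>UNIV. \<Sum>b\<in>UNIV. m a b c * m a b c' * v (a, b))"

text \<open>Strong complementarity: (mu_Z, eta_Z, deltaX, epsX) satisfy the bialgebra laws up to
  non-zero scalars.\<close>
definition strongly_complementary :: "('x::finite \<Rightarrow> 'x \<Rightarrow> 'x \<Rightarrow> complex) \<Rightarrow> ('x \<Rightarrow> complex) \<Rightarrow> bool" where
  "strongly_complementary m \<eta> \<longleftrightarrow>
     (\<exists>k::complex. k \<noteq> 0 \<and> (\<forall>v. deltaX (mu m v) = (\<lambda>p. k * bialg_rhs m v p))) \<and>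
     (\<exists>k::complex. k \<noteq> 0 \<and> (\<forall>v. epsX (mu m v) = k * (\<Sum>a\<in>UNIV. \<Sum>b\<in>UNIV. v (a, b)))) \<and>
     (\<exists>k::complex. k \<noteq> 0 \<and> deltaX \<eta> = (\<lambda>p. k * tensor \<eta> \<eta> p)) \<and>
     epsX \<eta> \<noteq> 0"

definition consistent_system :: "('g, 'b) monoid_scheme \<Rightarrow> nat \<Rightarrow> nat \<Rightarrow> (nat \<Rightarrow> nat \<Rightarrow> int) \<Rightarrow> (nat \<Rightarrow> 'g) \<Rightarrow> bool" where
  "consistent_system G M S n a \<longleftrightarrow>
     (\<forall>J::nat. \<forall>idx::nat \<Rightarrow> nat. \<forall>c::nat \<Rightarrow> int.
        J \<ge> 1 \<longrightarrow> (\<forall>j<J. idx j < S) \<longrightarrow>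
        (\<forall>r<M. (\<Sum>j<J. c j * n (idx j) r) = 0) \<longrightarrow>
        finprod G (\<lambda>j. a (idx j) [^]\<^bsub>G\<^esub> c j) {..<J} = \<one>\<^bsub>G\<^esub>)"

definition has_solution :: "('g, 'b) monoid_scheme \<Rightarrow> nat \<Rightarrow> nat \<Rightarrow> (nat \<Rightarrow> nat \<Rightarrow> int) \<Rightarrow> (nat \<Rightarrow> 'g) \<Rightarrow> bool" where
  "has_solution G M S n a \<longleftrightarrow>
     (\<exists>y::nat \<Rightarrow> 'g. (\<forall>r<M. y r \<in> carrier G) \<and>
        (\<forall>s<S. finprod G (\<lambda>r. y r [^]\<^bsub>G\<^esub> n s r) {..<M} = a s))"

end

theory Submission
  imports Defs
begin



lemma prod_powi_sum: "finite A \<Longrightarrow> (w::complex) \<noteq> 0 \<Longrightarrow> (\<Prod>s\<in>A. w powi f s) = w powi (\<Sum>s\<in>A. f s)"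
  by (induction A rule: finite_induct) (auto simp: power_int_add)

lemma prod_powi_distrib: "finite A \<Longrightarrow> (\<Prod>s\<in>A. (x s::complex) powi t) = (\<Prod>s\<in>A. x s) powi t"
  by (induction A rule: finite_induct) (auto simp: power_int_mult_distrib)

lemma root_unit:
  assumes "cmod (z::complex) = 1" "k > 0"
  shows "\<exists>w. cmod w = 1 \<and> w ^ k = z"
proof -
  have z0: "z \<noteq> 0" using assms by auto
  from bij_betw_nth_root_unity[OF z0 assms(2)] obtain c' where
    "bij_betw (\<lambda>x. c' * x) {x. x ^ k = 1} {x. x ^ k = z}" by blast
  then have "(\<lambda>x. c' * x) 1 \<in> {x. x ^ k = z}" by (rule bij_betw_apply) simp
  then have w: "c' ^ k = z" by simp
  then have "cmod c' ^ k = 1 ^ k" using assms by (metis norm_power power_one)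
  then have "cmod c' = 1" using power_eq_imp_eq_base[of "cmod c'" k 1] assms by simp
  with w show ?thesis by blast
qed

definition condV :: "'e set \<Rightarrow> 'v set \<Rightarrow> ('e \<Rightarrow> 'v \<Rightarrow> int) \<Rightarrow> ('e \<Rightarrow> int) \<Rightarrow> bool" where
  "condV E V n c \<longleftrightarrow> (\<forall>r\<in>V. (\<Sum>s\<in>E. c s * n s r) = 0)"

lemma condV_insert: "condV E (insert v V) n c \<longleftrightarrow> condV E V n c \<and> (\<Sum>s\<in>E. c s * n s v) = 0"
  by (auto simp: condV_def)

lemma condV_lin: "condV E V n c \<Longrightarrow> condV E V n d \<Longrightarrow> condV E V n (\<lambda>s. c s - t * d s)"
  by (simp add: condV_def algebra_simps sum_subtractf sum_distrib_left[symmetric])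

lemma key_root:
  fixes n :: "'e \<Rightarrow> 'v \<Rightarrow> int" and a :: "'e \<Rightarrow> complex"
  assumes E: "finite E" and a1: "\<forall>s\<in>E. cmod (a s) = 1"
    and cons: "\<forall>c. condV E (insert v V) n c \<longrightarrow> (\<Prod>s\<in>E. a s powi c s) = 1"
  shows "\<exists>w. cmod w = 1 \<and> (\<forall>c. condV E V n c \<longrightarrow> (\<Prod>s\<in>E. a s powi c s) = w powi (\<Sum>s\<in>E. c s * n s v))"
proof (cases "\<exists>c. condV E V n c \<and> (\<Sum>s\<in>E. c s * n s v) \<noteq> 0")
  case False
  then show ?thesis using cons
    by (intro exI[of _ 1]) (auto simp: condV_insert)
next
  case True
  define P where "P = (\<lambda>k::int. k > 0 \<and> (\<exists>c. condV E V n c \<and> (\<Sum>s\<in>E. c s * n s v) = k))"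
  from True obtain c0 where c0: "condV E V n c0" "(\<Sum>s\<in>E. c0 s * n s v) \<noteq> 0" by blast
  have Pa: "P \<bar>\<Sum>s\<in>E. c0 s * n s v\<bar>"
  proof (cases "(\<Sum>s\<in>E. c0 s * n s v) > 0")
    case True then show ?thesis using c0 unfolding P_def by auto
  next
    case False
    have "condV E V n (\<lambda>s. - c0 s)" using c0(1) by (simp add: condV_def sum_negf)
    moreover have "(\<Sum>s\<in>E. - c0 s * n s v) = \<bar>\<Sum>s\<in>E. c0 s * n s v\<bar>"
      using False by (simp add: sum_negf)
    ultimately show ?thesis using c0 unfolding P_def by auto
  qed
  define g where "g = int (LEAST m::nat. P (int m))"
  have Pg: "P g" and gmin: "\<And>k. P k \<Longrightarrow> g \<le> k"
  proof -
    have ex: "\<exists>m::nat. P (int m)" using Pa by (metis abs_ge_zero int_nat_eq)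
    show "P g" unfolding g_def by (rule LeastI_ex[OF ex])
    fix k assume Pk: "P k"
    then have k0: "k > 0" by (simp add: P_def)
    then have "P (int (nat k))" using Pk by simp
    then have "(LEAST m::nat. P (int m)) \<le> nat k" by (rule Least_le)
    then show "g \<le> k" unfolding g_def using k0 by linarith
  qed
  from Pg obtain cg where cg: "g > 0" "condV E V n cg" "(\<Sum>s\<in>E. cg s * n s v) = g"
    unfolding P_def by blast
  have a0: "\<And>s. s \<in> E \<Longrightarrow> a s \<noteq> 0" using a1 by auto
  define B where "B = (\<Prod>s\<in>E. a s powi cg s)"
  have "cmod B = 1" unfolding B_def using a1
    by (simp add: prod_norm[symmetric] norm_power_int)
  then obtain w where w: "cmod w = 1" "w ^ nat g = B" using root_unit[of B "nat g"] cg by auto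
  have w0: "w \<noteq> 0" using w by auto
  show ?thesis
  proof (intro exI[of _ w] conjI allI impI)
    show "cmod w = 1" by fact
    fix c assume cV: "condV E V n c"
    define k where "k = (\<Sum>s\<in>E. c s * n s v)"
    define t where "t = k div g"
    define c' where "c' = (\<lambda>s. c s - t * cg s)"
    have c'V: "condV E V n c'" unfolding c'_def by (rule condV_lin[OF cV cg(2)])
    have c'k: "(\<Sum>s\<in>E. c' s * n s v) = k mod g"
    proof -
      have "(\<Sum>s\<in>E. c' s * n s v) = k - t * g"
        unfolding c'_def k_def cg(3)[symmetric]
        by (simp add: algebra_simps sum_subtractf sum_distrib_left)
      then show ?thesis unfolding t_def using minus_div_mult_eq_mod[of k g] by linarith
    qed
    have "k mod g = 0"
    proof (rule ccontr)
      assume "k mod g \<noteq> 0"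
      then have "P (k mod g)" using c'V c'k cg(1) unfolding P_def
        by (metis pos_mod_sign order_le_less)
      then have "g \<le> k mod g" by (rule gmin)
      moreover have "k mod g < g" using cg(1) by simp
      ultimately show False by simp
    qed
    then have kt: "k = t * g" unfolding t_def using div_mult_mod_eq[of k g] by linarith
    have "(\<Prod>s\<in>E. a s powi c' s) = 1"
      using cons c'V c'k \<open>k mod g = 0\<close> by (simp add: condV_insert)
    have "(\<Prod>s\<in>E. a s powi c s) = (\<Prod>s\<in>E. a s powi c' s * (a s powi cg s) powi t)"
    proof (rule prod.cong[OF refl])
      fix s assume "s \<in> E"
      then have "a s \<noteq> 0" by (rule a0)
      then show "a s powi c s = a s powi c' s * (a s powi cg s) powi t"
        by (simp add: c'_def power_int_mult[symmetric] power_int_add[symmetric] mult.commute)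
    qed
    also have "\<dots> = (\<Prod>s\<in>E. a s powi c' s) * B powi t"
      by (simp add: prod.distrib B_def prod_powi_distrib[OF E])
    also have "\<dots> = B powi t" using \<open>(\<Prod>s\<in>E. a s powi c' s) = 1\<close> by simp
    also have "\<dots> = w powi k"
      using cg(1) w(2)[symmetric] kt
      by (simp add: power_int_mult mult.commute power_int_of_nat[symmetric])
    finally show "(\<Prod>s\<in>E. a s powi c s) = w powi (\<Sum>s\<in>E. c s * n s v)" unfolding k_def .
  qed
qed

lemma solve:
  fixes n :: "'e \<Rightarrow> 'v \<Rightarrow> int" and a :: "'e \<Rightarrow> complex"
  assumes "finite V" and E: "finite E" and "\<forall>s\<in>E. cmod (a s) = 1"
    and "\<forall>c. condV E V n c \<longrightarrow> (\<Prod>s\<in>E. a s powi c s) = 1"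
  shows "\<exists>y. (\<forall>r. cmod (y r) = 1) \<and> (\<forall>s\<in>E. (\<Prod>r\<in>V. y r powi n s r) = a s)"
  using assms(1,3,4)
proof (induction V arbitrary: a rule: finite_induct)
  case empty
  have "\<forall>s\<in>E. a s = 1"
  proof
    fix s assume s: "s \<in> E"
    have "condV E {} n (\<lambda>t. if t = s then 1 else 0)" by (simp add: condV_def)
    then have "(\<Prod>t\<in>E. a t powi (if t = s then 1 else 0)) = 1" using empty.prems(2) by blast
    moreover have "(\<Prod>t\<in>E. a t powi (if t = s then 1 else 0)) = (\<Prod>t\<in>E. if t = s then a t else 1)"
      by (rule prod.cong) auto
    moreover have "(\<Prod>t\<in>E. if t = s then a t else 1) = a s" using s E by simp
    ultimately show "a s = 1" by simp
  qed
  then show ?case by (intro exI[of _ "\<lambda>_. 1"]) simp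
next
  case (insert v V a)
  obtain w where w: "cmod w = 1"
    and wk: "\<forall>c. condV E V n c \<longrightarrow> (\<Prod>s\<in>E. a s powi c s) = w powi (\<Sum>s\<in>E. c s * n s v)"
    using key_root[OF E insert.prems(1) insert.prems(2)] by blast
  have w0: "w \<noteq> 0" using w by auto
  define a' where "a' = (\<lambda>s. a s * w powi (- n s v))"
  have a'1: "\<forall>s\<in>E. cmod (a' s) = 1" using insert.prems(1) w
    by (simp add: a'_def norm_mult norm_power_int)
  have a'c: "\<forall>c. condV E V n c \<longrightarrow> (\<Prod>s\<in>E. a' s powi c s) = 1"
  proof (intro allI impI)
    fix c assume cV: "condV E V n c"
    have "(\<Prod>s\<in>E. a' s powi c s) = (\<Prod>s\<in>E. a s powi c s * w powi (- (c s * n s v)))"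
      by (rule prod.cong[OF refl]) (simp add: a'_def power_int_mult_distrib power_int_mult[symmetric] mult.commute)
    also have "\<dots> = (\<Prod>s\<in>E. a s powi c s) * w powi (\<Sum>s\<in>E. - (c s * n s v))"
      by (simp add: prod.distrib prod_powi_sum[OF E w0])
    also have "\<dots> = w powi (\<Sum>s\<in>E. c s * n s v) * w powi (- (\<Sum>s\<in>E. c s * n s v))"
      using wk cV by (simp add: sum_negf)
    also have "\<dots> = 1" using w0 by (simp add: power_int_minus)
    finally show "(\<Prod>s\<in>E. a' s powi c s) = 1" .
  qed
  obtain y where y: "\<forall>r. cmod (y r) = 1" "\<forall>s\<in>E. (\<Prod>r\<in>V. y r powi n s r) = a' s"
    using insert.IH[OF a'1 a'c] by blast
  define y' where "y' = y(v := w)"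
  show ?case
  proof (intro exI[of _ y'] conjI ballI allI)
    fix r show "cmod (y' r) = 1" using y(1) w by (simp add: y'_def)
  next
    fix s assume s: "s \<in> E"
    have "(\<Prod>r\<in>insert v V. y' r powi n s r) = w powi n s v * (\<Prod>r\<in>V. y' r powi n s r)"
      using insert.hyps by (simp add: y'_def)
    also have "(\<Prod>r\<in>V. y' r powi n s r) = (\<Prod>r\<in>V. y r powi n s r)"
      using insert.hyps by (intro prod.cong) (auto simp: y'_def)
    also have "\<dots> = a' s" using y(2) s by blast
    also have "w powi n s v * a' s = a s * (w powi n s v * w powi (- n s v))"
      by (simp add: a'_def mult_ac)
    also have "\<dots> = a s" using w0 by (simp add: power_int_minus)
    finally show "(\<Prod>r\<in>insert v V. y' r powi n s r) = a s" .
  qed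
qed


locale fab = comm_group G for G :: "('x::finite,'b) monoid_scheme" (structure) +
  assumes univ: "carrier G = UNIV"
begin

lemma cl[simp]: "x \<in> carrier G" by (simp add: univ)

definition mZ :: "'x \<Rightarrow> 'x \<Rightarrow> 'x \<Rightarrow> complex" where
  "mZ a b c = (if a \<otimes>\<^bsub>G\<^esub> b = c then 1 else 0)"

lemma if10[simp]: "(if P then 1 else 0) * (x::complex) = (if P then x else 0)" by simp

lemma if10'[simp]: "(x::complex) * (if P then 1 else 0) = (if P then x else 0)" by simp

lemma cnj_mZ[simp]: "cnj (mZ a b c) = mZ a b c" by (simp add: mZ_def)

lemma sum_shift: "(\<Sum>b\<in>UNIV. f (a \<otimes> b)) = (\<Sum>b\<in>UNIV. (f b :: 'c::comm_monoid_add))"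
  by (rule sum.reindex_bij_witness[where i="\<lambda>b. inv a \<otimes> b" and j="\<lambda>b. a \<otimes> b"])
     (auto simp: m_assoc[symmetric])

lemma sum_refl: "(\<Sum>b\<in>UNIV. f (inv b \<otimes> c)) = (\<Sum>b\<in>UNIV. (f b :: 'c::comm_monoid_add))"
  by (rule sum.reindex_bij_witness[where i="\<lambda>b. inv b \<otimes> c" and j="\<lambda>b. inv b \<otimes> c"])
     (auto simp: inv_mult m_ac)

lemma sum_inv: "(\<Sum>b\<in>UNIV. f (inv b)) = (\<Sum>b\<in>UNIV. (f b :: 'c::comm_monoid_add))"
  by (rule sum.reindex_bij_witness[where i="\<lambda>b. inv b" and j="\<lambda>b. inv b"]) auto

lemma mu_eq: "mu mZ v = (\<lambda>c. \<Sum>a\<in>UNIV. v (a, inv a \<otimes> c))"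
proof
  fix c
  have "\<And>a b. (a \<otimes> b = c) = (b = inv a \<otimes> c)"
    by (metis cl inv_solve_left')
  then show "mu mZ v c = (\<Sum>a\<in>UNIV. v (a, inv a \<otimes> c))"
    unfolding mu_def mZ_def by (simp cong: if_cong)
qed

lemma comu_eq: "comu mZ v = (\<lambda>(a,b). v (a \<otimes> b))"
  unfolding comu_def cnj_mZ by (simp add: fun_eq_iff mZ_def)

lemma g1[simp]: "inv a \<otimes> (a \<otimes> b) = b" by (simp add: m_assoc[symmetric])
lemma g1'[simp]: "a \<otimes> (inv a \<otimes> b) = b" by (simp add: m_assoc[symmetric])
lemma g3[simp]: "inv (inv a \<otimes> c) \<otimes> c = a" by (simp add: inv_mult m_ac)
lemma g2: "inv (a \<otimes> b) \<otimes> d = inv b \<otimes> (inv a \<otimes> d)" by (simp add: inv_mult m_ac)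

lemma mZ_sum[simp]: "(\<Sum>b\<in>UNIV. mZ a b e * f b) = f (inv a \<otimes> e)"
proof -
  have "\<And>b. (a \<otimes> b = e) = (b = inv a \<otimes> e)" by (metis cl inv_solve_left')
  then show ?thesis by (simp add: mZ_def cong: if_cong)
qed

lemma mZ_sum2[simp]: "(\<Sum>c\<in>UNIV. mZ a b c * f c) = f (a \<otimes> b)"
  by (simp add: mZ_def)

definition eta :: "'x \<Rightarrow> complex" where "eta = ket \<one>"

definition conv :: "('x \<Rightarrow> complex) \<Rightarrow> ('x \<Rightarrow> complex) \<Rightarrow> ('x \<Rightarrow> complex)" where
  "conv \<psi> \<phi> = mu mZ (tensor \<psi> \<phi>)"

lemma conv_eq: "conv \<psi> \<phi> c = (\<Sum>a\<in>UNIV. \<psi> a * \<phi> (inv a \<otimes> c))"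
  by (simp add: conv_def mu_eq tensor_def)

lemma mu_swap: "mu mZ (swap2 v) = mu mZ v"
proof
  fix c
  have "mu mZ (swap2 v) c = (\<Sum>a\<in>UNIV. (\<lambda>b. v (b, inv b \<otimes> c)) (inv a \<otimes> c))"
    by (simp add: mu_eq swap2_def)
  also have "\<dots> = mu mZ v c" by (subst sum_refl) (simp add: mu_eq)
  finally show "mu mZ (swap2 v) c = mu mZ v c" .
qed

lemma mu_assoc: "mu mZ (mu_left mZ w) = mu mZ (mu_right mZ w)"
proof
  fix d
  have "mu mZ (mu_left mZ w) d = (\<Sum>e\<in>UNIV. \<Sum>a\<in>UNIV. w (a, inv a \<otimes> e, inv e \<otimes> d))"
    by (simp add: mu_eq mu_left_def)
  also have "\<dots> = (\<Sum>a\<in>UNIV. \<Sum>e\<in>UNIV. w (a, inv a \<otimes> e, inv e \<otimes> d))"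
    by (rule sum.swap)
  also have "\<dots> = (\<Sum>a\<in>UNIV. \<Sum>b\<in>UNIV. (\<lambda>e. w (a, inv a \<otimes> e, inv e \<otimes> d)) (a \<otimes> b))"
    by (subst sum_shift) simp
  also have "\<dots> = mu mZ (mu_right mZ w) d"
    by (simp add: mu_eq mu_right_def g2)
  finally show "mu mZ (mu_left mZ w) d = mu mZ (mu_right mZ w) d" .
qed

lemma mu_unit_l: "mu mZ (tensor eta \<psi>) = \<psi>"
  by (simp add: mu_eq tensor_def eta_def ket_def fun_eq_iff)

lemma mu_unit_r: "mu mZ (tensor \<psi> eta) = \<psi>"
proof
  fix c
  have "\<And>a. (inv a \<otimes> c = \<one>) = (a = c)" by (metis cl inv_equality inv_inv r_inv inv_closed m_closed g1 g1')
  then show "mu mZ (tensor \<psi> eta) c = \<psi> c"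
    by (simp add: mu_eq tensor_def eta_def ket_def cong: if_cong)
qed

lemma frob1: "mu_left mZ (comu_right mZ v) = comu mZ (mu mZ v)"
  by (simp add: fun_eq_iff mu_left_def comu_right_def comu_eq mu_eq m_assoc)

lemma frob2: "mu_right mZ (comu_left mZ v) = comu mZ (mu mZ v)"
proof -
  have "\<And>a e. (\<Sum>b\<in>UNIV. v (a \<otimes> b, inv b \<otimes> e)) = (\<Sum>x\<in>UNIV. v (x, inv x \<otimes> (a \<otimes> e)))"
  proof -
    fix a e
    have "(\<Sum>x\<in>UNIV. v (x, inv x \<otimes> (a \<otimes> e))) = (\<Sum>b\<in>UNIV. (\<lambda>x. v (x, inv x \<otimes> (a \<otimes> e))) (a \<otimes> b))"
      by (rule sum_shift[symmetric])
    also have "\<dots> = (\<Sum>b\<in>UNIV. v (a \<otimes> b, inv b \<otimes> e))"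
      by (simp add: inv_mult m_ac)
    finally show "(\<Sum>b\<in>UNIV. v (a \<otimes> b, inv b \<otimes> e)) = (\<Sum>x\<in>UNIV. v (x, inv x \<otimes> (a \<otimes> e)))" by simp
  qed
  then show ?thesis
    by (simp add: fun_eq_iff mu_right_def comu_left_def comu_eq mu_eq)
qed

lemma special: "mu mZ (comu mZ \<psi>) = (\<lambda>x. of_nat (card (UNIV::'x set)) * \<psi> x)"
  by (simp add: fun_eq_iff comu_eq mu_eq)

lemma qs: "qs_comm_dagger_frobenius mZ eta"
  unfolding qs_comm_dagger_frobenius_def
  using mu_swap mu_assoc mu_unit_l mu_unit_r frob1 frob2 special
  by (intro conjI allI exI[of _ "of_nat (card (UNIV::'x set))"]) auto

lemma mZmul: "mZ a b c * mZ a b c' = (if c = c' then mZ a b c else 0)"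
  by (simp add: mZ_def)

lemma sc: "strongly_complementary mZ eta"
  unfolding strongly_complementary_def
proof (intro conjI exI[of _ 1])
  show "\<forall>v. deltaX (mu mZ v) = (\<lambda>p. 1 * bialg_rhs mZ v p)"
  proof (intro allI ext, clarify)
    fix v c c'
    show "deltaX (mu mZ v) (c, c') = 1 * bialg_rhs mZ v (c, c')"
    proof (cases "c = c'")
      case True
      then show ?thesis unfolding deltaX_def bialg_rhs_def mu_def mZmul by simp
    next
      case False
      then show ?thesis unfolding deltaX_def bialg_rhs_def mu_def mZmul by simp
    qed
  qed
  show "\<forall>v. epsX (mu mZ v) = 1 * (\<Sum>a\<in>UNIV. \<Sum>b\<in>UNIV. v (a, b))"
  proof
    fix v
    have "epsX (mu mZ v) = (\<Sum>c\<in>UNIV. \<Sum>a\<in>UNIV. v (a, inv a \<otimes> c))"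
      by (simp add: epsX_def mu_eq)
    also have "\<dots> = (\<Sum>a\<in>UNIV. \<Sum>c\<in>UNIV. v (a, inv a \<otimes> c))"
      by (rule sum.swap)
    also have "\<dots> = (\<Sum>a\<in>UNIV. \<Sum>b\<in>UNIV. v (a, b))"
    proof (rule sum.cong[OF refl])
      fix a
      show "(\<Sum>c\<in>UNIV. v (a, inv a \<otimes> c)) = (\<Sum>b\<in>UNIV. v (a, b))"
        using sum_shift[of "\<lambda>b. v (a, b)" "inv a"] by simp
    qed
    finally show "epsX (mu mZ v) = 1 * (\<Sum>a\<in>UNIV. \<Sum>b\<in>UNIV. v (a, b))" by simp
  qed
  show "deltaX eta = (\<lambda>p. 1 * tensor eta eta p)"
    by (auto simp: fun_eq_iff deltaX_def tensor_def eta_def ket_def)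
  show "epsX eta \<noteq> 0" by (simp add: epsX_def eta_def ket_def)
qed simp_all


definition star :: "('x \<Rightarrow> complex) \<Rightarrow> ('x \<Rightarrow> complex)" where
  "star \<psi> = (\<lambda>a. cnj (\<psi> (inv a)))"

lemma conv_comm: "conv \<psi> \<phi> = conv \<phi> \<psi>"
proof -
  have "swap2 (tensor \<psi> \<phi>) = tensor \<phi> \<psi>" by (simp add: fun_eq_iff swap2_def tensor_def)
  then show ?thesis unfolding conv_def by (metis mu_swap)
qed

lemma conv_assoc: "conv (conv \<psi> \<phi>) \<chi> = conv \<psi> (conv \<phi> \<chi>)"
proof -
  define w where "w = (\<lambda>(a::'x, b::'x, c::'x). \<psi> a * \<phi> b * \<chi> c)"
  have 1: "mu_left mZ w = tensor (conv \<psi> \<phi>) \<chi>"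
    by (simp add: fun_eq_iff mu_left_def w_def tensor_def conv_def mu_def sum_distrib_right sum_distrib_left mult_ac)
  have 2: "mu_right mZ w = tensor \<psi> (conv \<phi> \<chi>)"
    by (simp add: fun_eq_iff mu_right_def w_def tensor_def conv_def mu_def sum_distrib_left mult_ac)
  show ?thesis using mu_assoc[of w] unfolding 1 2 conv_def .
qed

lemma conv_lcomm: "conv a (conv b c) = conv b (conv a c)"
proof -
  have "conv a (conv b c) = conv (conv a b) c" by (rule conv_assoc[symmetric])
  also have "\<dots> = conv (conv b a) c" by (subst conv_comm[of a b]) (rule refl)
  also have "\<dots> = conv b (conv a c)" by (rule conv_assoc)
  finally show ?thesis .
qed

lemma conv_unit[simp]: "conv eta \<psi> = \<psi>"
  by (simp add: conv_def mu_unit_l)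

lemma conv_unit'[simp]: "conv \<psi> eta = \<psi>"
  by (simp add: conv_def mu_unit_r)

lemma star_conv: "star (conv \<psi> \<phi>) = conv (star \<psi>) (star \<phi>)"
proof
  fix a
  have "conv (star \<psi>) (star \<phi>) a = (\<Sum>y\<in>UNIV. (\<lambda>y. cnj (\<psi> (inv y)) * cnj (\<phi> (inv (inv y \<otimes> a)))) y)"
    by (simp add: conv_eq star_def)
  also have "\<dots> = (\<Sum>x\<in>UNIV. (\<lambda>y. cnj (\<psi> (inv y)) * cnj (\<phi> (inv (inv y \<otimes> a)))) (inv x))"
    by (rule sum_inv[symmetric])
  also have "\<dots> = star (conv \<psi> \<phi>) a"
    by (simp add: conv_eq star_def inv_mult)
  finally show "star (conv \<psi> \<phi>) a = conv (star \<psi>) (star \<phi>) a" ..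
qed

lemma star_star[simp]: "star (star \<psi>) = \<psi>" by (simp add: star_def)

lemma star_eta[simp]: "star eta = eta"
  by (simp add: star_def eta_def ket_def fun_eq_iff inv_eq_1_iff)

lemma is_phase_iff: "is_phase mZ eta \<psi> \<longleftrightarrow> conv (star \<psi>) \<psi> = eta"
proof -
  have "\<And>b. conv (star \<psi>) \<psi> b = (\<Sum>a\<in>UNIV. cnj (\<psi> a) * comu mZ \<psi> (a, b))"
  proof -
    fix b
    have "conv (star \<psi>) \<psi> b = (\<Sum>a\<in>UNIV. (\<lambda>a. cnj (\<psi> a) * \<psi> (a \<otimes> b)) (inv a))"
      by (simp add: conv_eq star_def)
    also have "\<dots> = (\<Sum>a\<in>UNIV. cnj (\<psi> a) * comu mZ \<psi> (a, b))"
      by (subst sum_inv) (simp add: comu_eq)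
    finally show "conv (star \<psi>) \<psi> b = (\<Sum>a\<in>UNIV. cnj (\<psi> a) * comu mZ \<psi> (a, b))" .
  qed
  then have "conv (star \<psi>) \<psi> = (\<lambda>b. \<Sum>a\<in>UNIV. cnj (\<psi> a) * comu mZ \<psi> (a, b))" by (rule ext)
  then show ?thesis unfolding is_phase_def by simp
qed

lemma conv_scale: "conv (\<lambda>x. c * \<psi> x) (\<lambda>x. d * \<phi> x) = (\<lambda>x. (c * d) * conv \<psi> \<phi> x)"
  by (simp add: fun_eq_iff conv_eq sum_distrib_left mult.assoc mult.left_commute)

lemma star_scale: "star (\<lambda>x. c * \<psi> x) = (\<lambda>x. cnj c * star \<psi> x)"
  by (simp add: star_def)

lemma cnj_unit: "cmod c = 1 \<Longrightarrow> cnj c * c = 1"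
  by (metis complex_norm_square mult.commute of_real_1 power_one)

lemma phase_scale: "cmod c = 1 \<Longrightarrow> is_phase mZ eta (\<lambda>x. c * \<psi> x) \<longleftrightarrow> is_phase mZ eta \<psi>"
  by (simp add: is_phase_iff star_scale conv_scale cnj_unit)

lemma phase_conv: "is_phase mZ eta \<psi> \<Longrightarrow> is_phase mZ eta \<phi> \<Longrightarrow> is_phase mZ eta (conv \<psi> \<phi>)"
proof -
  assume a: "is_phase mZ eta \<psi>" "is_phase mZ eta \<phi>"
  have "conv (star (conv \<psi> \<phi>)) (conv \<psi> \<phi>) = conv (conv (star \<psi>) \<psi>) (conv (star \<phi>) \<phi>)"
    unfolding star_conv by (simp only: conv_assoc conv_comm conv_lcomm)
  then show ?thesis using a unfolding is_phase_iff by simp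
qed

lemma phase_star: "is_phase mZ eta \<psi> \<Longrightarrow> is_phase mZ eta (star \<psi>)"
  unfolding is_phase_iff by (simp add: conv_comm)

lemma phase_eta: "is_phase mZ eta eta"
  unfolding is_phase_iff by simp

lemma pc_self: "\<psi> \<in> phase_class \<psi>"
  unfolding phase_class_def by (auto intro!: exI[of _ 1])

lemma pc_iff: "\<phi> \<in> phase_class \<psi> \<longleftrightarrow> (\<exists>c. cmod c = 1 \<and> \<phi> = (\<lambda>x. c * \<psi> x))"
  unfolding phase_class_def by auto

lemma pc_scale: "cmod c = 1 \<Longrightarrow> phase_class (\<lambda>x. c * \<psi> x) = phase_class \<psi>"
proof -
  assume c: "cmod c = 1"
  then have c0: "c \<noteq> 0" by auto
  show ?thesis
  proof (rule equalityI; rule subsetI)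
    fix \<phi> assume "\<phi> \<in> phase_class (\<lambda>x. c * \<psi> x)"
    then obtain d where "cmod d = 1" "\<phi> = (\<lambda>x. d * (c * \<psi> x))" by (auto simp: pc_iff)
    then show "\<phi> \<in> phase_class \<psi>" using c
      by (auto simp: pc_iff norm_mult intro!: exI[of _ "d * c"])
  next
    fix \<phi> assume "\<phi> \<in> phase_class \<psi>"
    then obtain d where d: "cmod d = 1" "\<phi> = (\<lambda>x. d * \<psi> x)" by (auto simp: pc_iff)
    have "\<phi> = (\<lambda>x. (d / c) * (c * \<psi> x))" using d c0 by auto
    moreover have "cmod (d / c) = 1" using c d by (simp add: norm_divide)
    ultimately show "\<phi> \<in> phase_class (\<lambda>x. c * \<psi> x)"
      unfolding pc_iff by blast
  qed
qed

lemma some_pc: "\<exists>c. cmod c = 1 \<and> (SOME \<phi>. \<phi> \<in> phase_class \<psi>) = (\<lambda>x. c * \<psi> x)"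
proof -
  have "(SOME \<phi>. \<phi> \<in> phase_class \<psi>) \<in> phase_class \<psi>" by (metis pc_self someI)
  then show ?thesis by (simp add: pc_iff)
qed

abbreviation "PG \<equiv> phase_group mZ eta"

lemma PG_mult: "phase_class \<psi> \<otimes>\<^bsub>PG\<^esub> phase_class \<phi> = phase_class (conv \<psi> \<phi>)"
proof -
  obtain c where c: "cmod c = 1" "(SOME \<phi>'. \<phi>' \<in> phase_class \<psi>) = (\<lambda>x. c * \<psi> x)"
    using some_pc by blast
  obtain d where d: "cmod d = 1" "(SOME \<phi>'. \<phi>' \<in> phase_class \<phi>) = (\<lambda>x. d * \<phi> x)"
    using some_pc by blast
  have "phase_class \<psi> \<otimes>\<^bsub>PG\<^esub> phase_class \<phi> = phase_class (conv (\<lambda>x. c * \<psi> x) (\<lambda>x. d * \<phi> x))"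
    by (simp add: phase_group_def c d conv_def)
  also have "\<dots> = phase_class (conv \<psi> \<phi>)"
    using c d by (simp add: conv_scale pc_scale norm_mult)
  finally show ?thesis .
qed

lemma PG_one: "\<one>\<^bsub>PG\<^esub> = phase_class eta" by (simp add: phase_group_def)

lemma PG_carrier: "carrier PG = phase_class ` {\<psi>. is_phase mZ eta \<psi>}" by (simp add: phase_group_def)

lemma PG_comm: "comm_group PG"
proof (rule comm_groupI)
  fix x y z assume x: "x \<in> carrier PG" and y: "y \<in> carrier PG" and z: "z \<in> carrier PG"
  from x obtain \<psi> where p: "is_phase mZ eta \<psi>" "x = phase_class \<psi>" by (auto simp: PG_carrier)
  from y obtain \<phi> where q: "is_phase mZ eta \<phi>" "y = phase_class \<phi>" by (auto simp: PG_carrier)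
  from z obtain \<chi> where r: "is_phase mZ eta \<chi>" "z = phase_class \<chi>" by (auto simp: PG_carrier)
  show "x \<otimes>\<^bsub>PG\<^esub> y \<in> carrier PG" using p q by (simp add: PG_mult PG_carrier phase_conv)
  show "x \<otimes>\<^bsub>PG\<^esub> y \<otimes>\<^bsub>PG\<^esub> z = x \<otimes>\<^bsub>PG\<^esub> (y \<otimes>\<^bsub>PG\<^esub> z)"
    using p q r by (simp add: PG_mult conv_assoc)
  show "x \<otimes>\<^bsub>PG\<^esub> y = y \<otimes>\<^bsub>PG\<^esub> x" using p q by (simp add: PG_mult conv_comm)
  show "\<one>\<^bsub>PG\<^esub> \<otimes>\<^bsub>PG\<^esub> x = x" using p by (simp add: PG_mult PG_one)
  show "\<exists>y\<in>carrier PG. y \<otimes>\<^bsub>PG\<^esub> x = \<one>\<^bsub>PG\<^esub>"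
  proof (intro bexI[of _ "phase_class (star \<psi>)"])
    show "phase_class (star \<psi>) \<in> carrier PG" using phase_star[OF p(1)] by (simp add: PG_carrier)
    show "phase_class (star \<psi>) \<otimes>\<^bsub>PG\<^esub> x = \<one>\<^bsub>PG\<^esub>"
      using p by (simp add: PG_mult PG_one is_phase_iff)
  qed
next
  show "\<one>\<^bsub>PG\<^esub> \<in> carrier PG" using phase_eta by (simp add: PG_one PG_carrier)
qed


lemma star_ket: "star (ket g) = ket (inv g)"
  by (auto simp: fun_eq_iff star_def ket_def)

lemma conv_ket: "conv (ket a) (ket b) = ket (a \<otimes> b)"
proof
  fix c
  have "\<And>c. (inv a \<otimes> c = b) = (c = a \<otimes> b)" by (metis cl g1 g1')
  have "\<And>x y. ket a x * y = (if x = a then y else 0)" by (simp add: ket_def)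
  then have "conv (ket a) (ket b) c = ket b (inv a \<otimes> c)" by (simp add: conv_eq)
  then show "conv (ket a) (ket b) c = ket (a \<otimes> b) c"
    using \<open>\<And>c. (inv a \<otimes> c = b) = (c = a \<otimes> b)\<close> by (simp add: ket_def)
qed

lemma ket_phase: "is_phase mZ eta (ket g)"
  unfolding is_phase_iff by (simp add: star_ket conv_ket eta_def)

lemma PG_group: "group PG" using PG_comm comm_group_def by blast

lemma PG_inv: "is_phase mZ eta \<psi> \<Longrightarrow> inv\<^bsub>PG\<^esub> (phase_class \<psi>) = phase_class (star \<psi>)"
proof -
  assume p: "is_phase mZ eta \<psi>"
  have 1: "phase_class \<psi> \<in> carrier PG" using p by (simp add: PG_carrier)
  have 2: "phase_class (star \<psi>) \<in> carrier PG" using phase_star[OF p] by (simp add: PG_carrier)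
  have 3: "phase_class (star \<psi>) \<otimes>\<^bsub>PG\<^esub> phase_class \<psi> = \<one>\<^bsub>PG\<^esub>"
    using p by (simp add: PG_mult PG_one is_phase_iff)
  show ?thesis by (rule group.inv_equality[OF PG_group 3 1 2])
qed

definition K :: "('x \<Rightarrow> complex) set set" where "K = phase_class ` range ket"

lemma K_sub: "subgroup K PG"
proof (rule group.subgroupI[OF PG_group])
  show "K \<subseteq> carrier PG" using ket_phase by (auto simp: K_def PG_carrier)
  show "K \<noteq> {}" by (simp add: K_def)
  show "\<And>a. a \<in> K \<Longrightarrow> inv\<^bsub>PG\<^esub> a \<in> K"
    by (auto simp: K_def PG_inv ket_phase star_ket)
  show "\<And>a b. a \<in> K \<Longrightarrow> b \<in> K \<Longrightarrow> a \<otimes>\<^bsub>PG\<^esub> b \<in> K"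
    by (auto simp: K_def PG_mult conv_ket)
qed

lemma pc_ket_inj: "phase_class (ket a) = phase_class (ket b) \<Longrightarrow> a = b"
proof -
  assume "phase_class (ket a) = phase_class (ket b)"
  then have "ket a \<in> phase_class (ket b)" using pc_self by metis
  then obtain c where "ket a = (\<lambda>x. c * ket b x)" by (auto simp: pc_iff)
  then have "ket a a = c * ket b a" by metis
  then show "a = b" by (auto simp: ket_def split: if_splits)
qed

lemma f_iso: "(\<lambda>g. phase_class (ket g)) \<in> iso G (PG\<lparr>carrier := K\<rparr>)"
  unfolding iso_def hom_def
proof (intro CollectI conjI)
  show "(\<lambda>g. phase_class (ket g)) \<in> carrier G \<rightarrow> carrier (PG\<lparr>carrier := K\<rparr>)"
    by (auto simp: K_def)
  show "\<forall>x\<in>carrier G. \<forall>y\<in>carrier G. phase_class (ket (x \<otimes> y)) =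
     phase_class (ket x) \<otimes>\<^bsub>PG\<lparr>carrier := K\<rparr>\<^esub> phase_class (ket y)"
    by (simp add: PG_mult conv_ket)
  show "bij_betw (\<lambda>g. phase_class (ket g)) (carrier G) (carrier (PG\<lparr>carrier := K\<rparr>))"
    by (auto simp: bij_betw_def inj_on_def K_def intro: pc_ket_inj)
qed


end


context fab begin
definition chars :: "('x \<Rightarrow> complex) set" where
  "chars = {\<chi>. (\<forall>x y. \<chi> (x \<otimes> y) = \<chi> x * \<chi> y) \<and> (\<forall>x. cmod (\<chi> x) = 1)}"

lemma chD: "\<chi> \<in> chars \<Longrightarrow> \<chi> (x \<otimes> y) = \<chi> x * \<chi> y" "\<chi> \<in> chars \<Longrightarrow> cmod (\<chi> x) = 1"
  by (auto simp: chars_def)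

lemma ch0: "\<chi> \<in> chars \<Longrightarrow> \<chi> x \<noteq> 0" by (metis chD(2) norm_zero zero_neq_one)

lemma ch_one: "\<chi> \<in> chars \<Longrightarrow> \<chi> \<one> = 1"
proof -
  assume c: "\<chi> \<in> chars"
  have "\<chi> \<one> = \<chi> \<one> * \<chi> \<one>" using chD(1)[OF c, of \<one> \<one>] by simp
  then show ?thesis using ch0[OF c, of \<one>] by simp
qed

lemma cnj_inverse: "cmod z = 1 \<Longrightarrow> cnj z = inverse z"
  by (metis cnj_unit inverse_unique mult.commute)

lemma ch_inv: "\<chi> \<in> chars \<Longrightarrow> \<chi> (inv x) = cnj (\<chi> x)"
proof -
  assume c: "\<chi> \<in> chars"
  have "\<chi> x * \<chi> (inv x) = 1" using chD(1)[OF c, of x "inv x"] ch_one[OF c] by simp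
  then show ?thesis using cnj_inverse[OF chD(2)[OF c]] by (metis inverse_unique)
qed

lemma ch_pow: assumes c: "\<chi> \<in> chars" shows "\<chi> (x [^] (k::nat)) = \<chi> x ^ k"
  by (induction k) (simp_all add: ch_one[OF c] chD(1)[OF c])

lemma ch_intpow: assumes c: "\<chi> \<in> chars" shows "\<chi> (x [^] (k::int)) = \<chi> x powi k"
proof (cases "k < 0")
  case True
  have "\<chi> (x [^] k) = \<chi> (inv (x [^] nat (- k)))" using True by (simp del: pow_nat add: int_pow_def2)
  also have "\<dots> = cnj (\<chi> (x [^] nat (- k)))" by (rule ch_inv[OF c])
  also have "\<dots> = inverse (\<chi> (x [^] nat (- k)))" by (rule cnj_inverse[OF chD(2)[OF c]])
  also have "\<dots> = inverse (\<chi> x ^ nat (- k))" by (simp only: ch_pow[OF c])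
  also have "\<dots> = \<chi> x powi k" using True by (simp add: power_int_def power_inverse)
  finally show ?thesis .
next
  case False
  then have "x [^] k = x [^] nat k" by (simp del: pow_nat add: int_pow_def2)
  then show ?thesis using False by (simp del: pow_nat add: ch_pow[OF c] power_int_def)
qed

lemma ch_finprod:
  assumes c: "\<chi> \<in> chars" and A: "finite A"
  shows "\<chi> (finprod G f A) = (\<Prod>a\<in>A. \<chi> (f a))"
  using A by (induction A rule: finite_induct) (simp_all add: ch_one[OF c] chD(1)[OF c] Pi_def)

lemma chars_finite: "finite chars"
proof -
  define N where "N = order G"
  have N0: "N > 0" by (simp add: N_def order_def univ card_gt_0_iff)
  define R where "R = {z::complex. z ^ N = 1}"
  have "finite R" unfolding R_def using N0 by (rule finite_nth_roots)
  then have "finite (PiE UNIV (\<lambda>_::'x. R))" by (intro finite_PiE) auto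
  moreover have "chars \<subseteq> PiE UNIV (\<lambda>_::'x. R)"
  proof
    fix \<chi> assume c: "\<chi> \<in> chars"
    have "\<And>x. \<chi> x ^ N = 1"
    proof -
      fix x
      have "\<chi> (x [^] N) = 1" unfolding N_def using pow_order_eq_1[of x] ch_one[OF c] by simp
      then show "\<chi> x ^ N = 1" using ch_pow[OF c, of x N] by simp
    qed
    then show "\<chi> \<in> PiE UNIV (\<lambda>_. R)" by (simp add: R_def PiE_def extensional_def)
  qed
  ultimately show ?thesis by (rule finite_subset[rotated])
qed

lemma chars_mult: "\<chi> \<in> chars \<Longrightarrow> \<chi>' \<in> chars \<Longrightarrow> (\<lambda>x. \<chi> x * \<chi>' x) \<in> chars"
  by (auto simp: chars_def norm_mult)

lemma chars_cnj: "\<chi> \<in> chars \<Longrightarrow> (\<lambda>x. cnj (\<chi> x)) \<in> chars"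
  by (auto simp: chars_def)

lemma chars_1: "(\<lambda>x. 1) \<in> chars" by (simp add: chars_def)

lemma sum_ch_G: "\<chi> \<in> chars \<Longrightarrow> \<chi> x0 \<noteq> 1 \<Longrightarrow> (\<Sum>x\<in>UNIV. \<chi> x) = 0"
proof -
  assume c: "\<chi> \<in> chars" and x0: "\<chi> x0 \<noteq> 1"
  have "(\<Sum>x\<in>UNIV. \<chi> x) = (\<Sum>x\<in>UNIV. \<chi> (x0 \<otimes> x))" by (rule sum_shift[symmetric])
  also have "\<dots> = \<chi> x0 * (\<Sum>x\<in>UNIV. \<chi> x)" by (simp add: chD(1)[OF c] sum_distrib_left)
  finally have "(1 - \<chi> x0) * (\<Sum>x\<in>UNIV. \<chi> x) = 0" by (simp add: algebra_simps)
  then show ?thesis using x0 by simp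
qed

lemma orth: "\<chi> \<in> chars \<Longrightarrow> \<chi>' \<in> chars \<Longrightarrow>
  (\<Sum>a\<in>UNIV. \<chi> a * cnj (\<chi>' a)) = (if \<chi> = \<chi>' then of_nat (card (UNIV::'x set)) else 0)"
proof -
  assume c: "\<chi> \<in> chars" and c': "\<chi>' \<in> chars"
  show ?thesis
  proof (cases "\<chi> = \<chi>'")
    case True
    then show ?thesis using chD(2)[OF c'] by (simp add: cnj_unit[simplified mult.commute])
  next
    case False
    then obtain a where a: "\<chi> a \<noteq> \<chi>' a" by auto
    have "\<chi> a * cnj (\<chi>' a) \<noteq> 1"
    proof
      assume "\<chi> a * cnj (\<chi>' a) = 1"
      then have "\<chi> a * cnj (\<chi>' a) * \<chi>' a = \<chi>' a" by simp
      then show False using a cnj_unit[OF chD(2)[OF c']] by (simp add: mult.assoc)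
    qed
    then have "(\<Sum>a\<in>UNIV. \<chi> a * cnj (\<chi>' a)) = 0"
      by (rule sum_ch_G[OF chars_mult[OF c chars_cnj[OF c']]])
    then show ?thesis using False by simp
  qed
qed

end


context fab begin

lemma finprod_intpow: "finite A \<Longrightarrow> (finprod G f A) [^] (k::int) = finprod G (\<lambda>v. f v [^] k) A"
  by (induction A rule: finite_induct) (simp_all add: Pi_def int_pow_distrib)

lemma relL:
  fixes y :: "'x \<Rightarrow> 'x" and F :: "'e \<Rightarrow> 'x \<Rightarrow> int"
  assumes E: "finite E"
  shows "finprod G (\<lambda>s. (finprod G (\<lambda>v. y v [^] F s v) UNIV) [^] c s) E
       = finprod G (\<lambda>v. y v [^] (\<Sum>s\<in>E. c s * F s v)) UNIV"
  using E
proof (induction E rule: finite_induct)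
  case empty
  show ?case by simp
next
  case (insert e E)
  have "finprod G (\<lambda>s. (finprod G (\<lambda>v. y v [^] F s v) UNIV) [^] c s) (insert e E)
     = (finprod G (\<lambda>v. y v [^] F e v) UNIV) [^] c e \<otimes> finprod G (\<lambda>v. y v [^] (\<Sum>s\<in>E. c s * F s v)) UNIV"
    using insert by (simp add: Pi_def)
  also have "\<dots> = finprod G (\<lambda>v. (y v [^] F e v) [^] c e) UNIV \<otimes> finprod G (\<lambda>v. y v [^] (\<Sum>s\<in>E. c s * F s v)) UNIV"
    by (simp add: finprod_intpow)
  also have "\<dots> = finprod G (\<lambda>v. (y v [^] F e v) [^] c e \<otimes> y v [^] (\<Sum>s\<in>E. c s * F s v)) UNIV"
    by (simp add: Pi_def)
  also have "(\<lambda>v. (y v [^] F e v) [^] c e \<otimes> y v [^] (\<Sum>s\<in>E. c s * F s v)) = (\<lambda>v. y v [^] (\<Sum>s\<in>insert e E. c s * F s v))"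
  proof
    fix v
    have "(y v [^] F e v) [^] c e \<otimes> y v [^] (\<Sum>s\<in>E. c s * F s v) = y v [^] (c e * F e v + (\<Sum>s\<in>E. c s * F s v))"
      by (simp add: int_pow_pow int_pow_mult mult.commute)
    then show "(y v [^] F e v) [^] c e \<otimes> y v [^] (\<Sum>s\<in>E. c s * F s v) = y v [^] (\<Sum>s\<in>insert e E. c s * F s v)"
      using insert by simp
  qed
  finally show ?case .
qed

lemma single_G: fixes x :: "'c::finite" shows "finprod G (\<lambda>v. if v = x then h else \<one>) UNIV = h"
  using finprod_singleton_swap[of x UNIV "\<lambda>_. h"] finite_UNIV by (simp add: Pi_def)

lemma pow_ind: "v [^] (if v = x then (k::int) else 0) = (if v = x then x [^] k else \<one>)"
  by simp

lemma sep: assumes b: "b \<noteq> \<one>" shows "\<exists>\<chi>\<in>chars. \<chi> b \<noteq> 1"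
proof -
  define nE :: "('x \<times> 'x) option \<Rightarrow> 'x \<Rightarrow> int" where "nE = (\<lambda>s v. case s of None \<Rightarrow> (if v = b then 1 else 0)
     | Some (x, y) \<Rightarrow> (if v = x then 1 else 0) + (if v = y then 1 else 0) + (if v = x \<otimes> y then -1 else 0))"
  define od where "od = ord b"
  have o1: "od \<ge> 1" unfolding od_def by (rule ord_ge_1) (simp_all add: univ)
  have o_ne1: "od \<noteq> 1"
  proof
    assume "od = 1"
    then have "b [^] (1::nat) = \<one>" using pow_ord_eq_1[of b] unfolding od_def by simp
    then show False using b by simp
  qed
  define \<omega> where "\<omega> = cis (2 * pi / od)"
  have \<omega>o: "\<omega> ^ od = 1" using o1 by (simp add: \<omega>_def DeMoivre)
  have \<omega>1: "\<omega> \<noteq> 1"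
  proof
    assume "\<omega> = 1"
    then have "cos (2 * pi / od) = cos 0" by (metis Re_complex_of_real \<omega>_def cis.sel(1) cos_zero one_complex.sel(1))
    moreover have "cos (2 * pi / od) < cos 0"
    proof (subst cos_mono_less_eq)
      have "real od \<ge> 2" using o1 o_ne1 by simp
      then have "2 * pi / od \<le> pi" using pi_gt_zero by (simp add: field_simps)
      then show "0 \<le> 2 * pi / real od" "2 * pi / real od \<le> pi" "0 \<le> (0::real)" "0 \<le> pi"
        using o1 pi_gt_zero by auto
      show "0 < 2 * pi / real od" using o1 pi_gt_zero by auto
    qed
    ultimately show False by simp
  qed
  have \<omega>n: "cmod \<omega> = 1" by (simp add: \<omega>_def)
  define aE :: "('x \<times> 'x) option \<Rightarrow> complex" where "aE = (\<lambda>s. case s of None \<Rightarrow> \<omega> | Some _ \<Rightarrow> 1)"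
  have gE: "\<And>s. finprod G (\<lambda>v. v [^] nE s v) UNIV = (if s = None then b else \<one>)"
  proof -
    fix s show "finprod G (\<lambda>v. v [^] nE s v) UNIV = (if s = None then b else \<one>)"
    proof (cases s)
      case None
      then show ?thesis by (simp add: nE_def single_G pow_ind del: pow_nat)
    next
      case (Some p)
      obtain x z where p: "p = (x, z)" by (cases p)
      have "\<And>v. v [^] nE s v = (if v = x then x else \<one>) \<otimes> (if v = z then z else \<one>) \<otimes> (if v = x \<otimes> z then inv (x \<otimes> z) else \<one>)"
        by (simp add: nE_def Some p int_pow_mult pow_ind int_pow_neg del: pow_nat)
      then have "finprod G (\<lambda>v. v [^] nE s v) UNIV = x \<otimes> z \<otimes> inv (x \<otimes> z)"
        by (simp add: Pi_def single_G)
      then show ?thesis using Some by simp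
    qed
  qed
  have cons: "\<forall>c. condV UNIV UNIV nE c \<longrightarrow> (\<Prod>s\<in>UNIV. aE s powi c s) = 1"
  proof (intro allI impI)
    fix c assume cV: "condV UNIV UNIV nE c"
    have "finprod G (\<lambda>s. (finprod G (\<lambda>v. v [^] nE s v) UNIV) [^] c s) UNIV
       = finprod G (\<lambda>v. v [^] (\<Sum>s\<in>UNIV. c s * nE s v)) UNIV" by (rule relL) simp
    also have "\<dots> = \<one>" using cV by (intro finprod_one_eqI) (simp add: condV_def)
    finally have "finprod G (\<lambda>s::('x \<times> 'x) option. if s = None then b [^] c None else \<one>) UNIV = \<one>"
      by (simp add: gE if_distrib[of "\<lambda>x. x [^] _"] cong: if_cong)
    then have "b [^] c None = \<one>" using single_G[of "None::('x \<times> 'x) option" "b [^] c None"] by simp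
    then have "int od dvd c None" unfolding od_def by (simp add: int_pow_eq_id)
    then obtain t where t: "c None = int od * t" by blast
    have "(\<Prod>s\<in>UNIV. aE s powi c s) = (\<Prod>s\<in>(UNIV::('x \<times> 'x) option set). if s = None then \<omega> powi c None else 1)"
      by (rule prod.cong) (auto simp: aE_def split: option.splits)
    also have "\<dots> = \<omega> powi c None" by simp
    also have "\<dots> = 1" unfolding t by (simp add: power_int_mult \<omega>o)
    finally show "(\<Prod>s\<in>UNIV. aE s powi c s) = 1" .
  qed
  have aE1: "\<forall>s\<in>UNIV. cmod (aE s) = 1" by (simp add: aE_def \<omega>n split: option.splits)
  obtain y where y: "\<forall>r. cmod (y r) = 1" "\<forall>s\<in>UNIV. (\<Prod>r\<in>UNIV. y r powi nE s r) = aE s"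
    using solve[OF finite_UNIV finite_UNIV aE1 cons] by blast
  have y0: "\<And>r. y r \<noteq> 0" using y(1) by (metis norm_zero zero_neq_one)
  have hom: "\<And>x z. y (x \<otimes> z) = y x * y z"
  proof -
    fix x z
    have "\<And>r. y r powi nE (Some (x, z)) r = (if r = x then y r else 1) * (if r = z then y r else 1) * (if r = x \<otimes> z then inverse (y r) else 1)"
      using y0 by (simp add: nE_def power_int_add)
    then have "(\<Prod>r\<in>UNIV. y r powi nE (Some (x, z)) r) = y x * y z * inverse (y (x \<otimes> z))"
      by (simp add: prod.distrib)
    then have "y x * y z * inverse (y (x \<otimes> z)) = 1" using y(2) by (simp add: aE_def)
    then show "y (x \<otimes> z) = y x * y z" using y0 by (simp add: field_simps)
  qed
  have "(\<Prod>r\<in>UNIV. y r powi nE None r) = y b" by (simp add: nE_def if_distrib[of "\<lambda>k. _ powi k"] cong: if_cong)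
  then have "y b = \<omega>" using y(2) by (simp add: aE_def)
  moreover have "y \<in> chars" using hom y(1) by (simp add: chars_def)
  ultimately show ?thesis using \<omega>1 by blast
qed

end


context fab begin

lemma sum_chars: assumes b: "b \<noteq> \<one>" shows "(\<Sum>\<chi>\<in>chars. \<chi> b) = 0"
proof -
  obtain \<chi>0 where c0: "\<chi>0 \<in> chars" "\<chi>0 b \<noteq> 1" using sep[OF b] by blast
  have u: "\<And>x. cnj (\<chi>0 x) * \<chi>0 x = 1" using cnj_unit[OF chD(2)[OF c0(1)]] by simp
  have "(\<Sum>\<chi>\<in>chars. \<chi>0 b * \<chi> b) = (\<Sum>\<chi>\<in>chars. \<chi> b)"
  proof (rule sum.reindex_bij_witness[where j="\<lambda>\<chi> x. \<chi>0 x * \<chi> x" and i="\<lambda>\<chi> x. cnj (\<chi>0 x) * \<chi> x"])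
    fix \<chi> assume "\<chi> \<in> chars"
    show "(\<lambda>x. cnj (\<chi>0 x) * (\<chi>0 x * \<chi> x)) = \<chi>" using u by (simp add: mult.assoc[symmetric])
    show "(\<lambda>x. \<chi>0 x * \<chi> x) \<in> chars" using chars_mult[OF c0(1) \<open>\<chi> \<in> chars\<close>] .
    show "(\<lambda>x. \<chi>0 x * (cnj (\<chi>0 x) * \<chi> x)) = \<chi>" using u by (simp add: mult.assoc[symmetric] mult.commute)
    show "(\<lambda>x. cnj (\<chi>0 x) * \<chi> x) \<in> chars" using chars_mult[OF chars_cnj[OF c0(1)] \<open>\<chi> \<in> chars\<close>] .
    show "\<chi>0 b * \<chi> b = \<chi>0 b * \<chi> b" ..
  qed
  then have "\<chi>0 b * (\<Sum>\<chi>\<in>chars. \<chi> b) = 1 * (\<Sum>\<chi>\<in>chars. \<chi> b)" by (simp add: sum_distrib_left)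
  then have "(\<chi>0 b - 1) * (\<Sum>\<chi>\<in>chars. \<chi> b) = 0" by (simp add: left_diff_distrib)
  then show ?thesis using c0(2) by simp
qed

lemma sum_G_ch: "\<chi> \<in> chars \<Longrightarrow> (\<Sum>x\<in>UNIV. \<chi> x) = (if \<chi> = (\<lambda>_. 1) then of_nat (card (UNIV::'x set)) else 0)"
proof -
  assume c: "\<chi> \<in> chars"
  show ?thesis
  proof (cases "\<chi> = (\<lambda>_. 1)")
    case False
    then obtain x where "\<chi> x \<noteq> 1" by auto
    then show ?thesis using sum_ch_G[OF c] False by simp
  qed simp
qed

lemma card_chars: "card chars = card (UNIV::'x set)"
proof -
  have "(\<Sum>\<chi>\<in>chars. \<Sum>x\<in>UNIV. \<chi> x) = (\<Sum>x\<in>UNIV. \<Sum>\<chi>\<in>chars. \<chi> x)" by (rule sum.swap)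
  moreover have "(\<Sum>\<chi>\<in>chars. \<Sum>x\<in>UNIV. \<chi> x) = of_nat (card (UNIV::'x set))"
  proof -
    have "(\<Sum>\<chi>\<in>chars. \<Sum>x\<in>UNIV. \<chi> x) = (\<Sum>\<chi>\<in>chars. if \<chi> = (\<lambda>_. 1) then of_nat (card (UNIV::'x set)) else 0)"
      by (rule sum.cong[OF refl]) (rule sum_G_ch)
    also have "\<dots> = of_nat (card (UNIV::'x set))" using chars_1 chars_finite by simp
    finally show ?thesis .
  qed
  moreover have "(\<Sum>x\<in>UNIV. \<Sum>\<chi>\<in>chars. \<chi> x) = of_nat (card chars)"
  proof -
    have "(\<Sum>x\<in>UNIV. \<Sum>\<chi>\<in>chars. \<chi> x) = (\<Sum>x\<in>UNIV. if x = \<one> then of_nat (card chars) else 0)"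
    proof (rule sum.cong[OF refl])
      fix x show "(\<Sum>\<chi>\<in>chars. \<chi> x) = (if x = \<one> then of_nat (card chars) else 0)"
        using sum_chars[of x] by (simp add: ch_one)
    qed
    also have "\<dots> = of_nat (card chars)" by simp
    finally show ?thesis .
  qed
  ultimately have "(of_nat (card chars) :: complex) = of_nat (card (UNIV::'x set))" by simp
  then show ?thesis using of_nat_eq_iff by blast
qed

definition NN :: complex where "NN = of_nat (card (UNIV::'x set))"

lemma NN0: "NN \<noteq> 0" by (simp add: NN_def card_gt_0_iff)

definition psi :: "(('x \<Rightarrow> complex) \<Rightarrow> complex) \<Rightarrow> 'x \<Rightarrow> complex" where
  "psi l x = (\<Sum>\<chi>\<in>chars. l \<chi> * cnj (\<chi> x)) / NN"

lemma psi_cong: "(\<And>\<chi>. \<chi> \<in> chars \<Longrightarrow> l \<chi> = l' \<chi>) \<Longrightarrow> psi l = psi l'"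
  unfolding psi_def by (intro ext arg_cong[where f="\<lambda>z. z / NN"] sum.cong) auto

lemma psi_ket: "psi (\<lambda>\<chi>. \<chi> g) = ket g"
proof
  fix x
  have "(\<Sum>\<chi>\<in>chars. \<chi> g * cnj (\<chi> x)) = (\<Sum>\<chi>\<in>chars. \<chi> (g \<otimes> inv x))"
    by (rule sum.cong[OF refl]) (simp add: chD(1) ch_inv)
  also have "\<dots> = (if x = g then NN else 0)"
  proof (cases "x = g")
    case True
    then show ?thesis using card_chars by (simp add: ch_one NN_def)
  next
    case False
    then have "g \<otimes> inv x \<noteq> \<one>" by (metis cl inv_equality inv_inv)
    then show ?thesis using sum_chars False by simp
  qed
  finally show "psi (\<lambda>\<chi>. \<chi> g) x = ket g x" using NN0 by (simp add: psi_def ket_def)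
qed

lemma psi_one: "psi (\<lambda>\<chi>. 1) = eta"
proof -
  have "psi (\<lambda>\<chi>. 1) = psi (\<lambda>\<chi>. \<chi> \<one>)" by (rule psi_cong) (simp add: ch_one)
  then show ?thesis by (simp add: psi_ket eta_def)
qed


lemma cnj_ch_shift: "\<chi> \<in> chars \<Longrightarrow> cnj (\<chi> (inv a \<otimes> c)) = \<chi> a * cnj (\<chi> c)"
  by (simp add: chD(1) ch_inv)

lemma psi_conv: "conv (psi l) (psi m) = psi (\<lambda>\<chi>. l \<chi> * m \<chi>)"
proof
  fix c
  define XX where "XX = (\<lambda>\<chi> \<chi>'. l \<chi> * m \<chi>' * cnj (\<chi>' c))"
  have 1: "\<And>a. psi l a * psi m (inv a \<otimes> c) =
     (\<Sum>\<chi>\<in>chars. \<Sum>\<chi>'\<in>chars. XX \<chi> \<chi>' * (\<chi>' a * cnj (\<chi> a))) / (NN * NN)"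
  proof -
    fix a
    have pm: "psi m (inv a \<otimes> c) = (\<Sum>\<chi>'\<in>chars. m \<chi>' * (\<chi>' a * cnj (\<chi>' c))) / NN"
      unfolding psi_def by (intro arg_cong[where f="\<lambda>z. z / NN"] sum.cong) (auto simp: cnj_ch_shift)
    then have "psi l a * psi m (inv a \<otimes> c) =
      ((\<Sum>\<chi>\<in>chars. l \<chi> * cnj (\<chi> a)) * (\<Sum>\<chi>'\<in>chars. m \<chi>' * (\<chi>' a * cnj (\<chi>' c)))) / (NN * NN)"
      by (simp only: pm psi_def[of l a]) simp
    also have "\<dots> = (\<Sum>\<chi>\<in>chars. \<Sum>\<chi>'\<in>chars. XX \<chi> \<chi>' * (\<chi>' a * cnj (\<chi> a))) / (NN * NN)"
      by (simp add: sum_product XX_def mult_ac)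
    finally show "psi l a * psi m (inv a \<otimes> c) =
     (\<Sum>\<chi>\<in>chars. \<Sum>\<chi>'\<in>chars. XX \<chi> \<chi>' * (\<chi>' a * cnj (\<chi> a))) / (NN * NN)" .
  qed
  have "conv (psi l) (psi m) c = (\<Sum>a\<in>UNIV. \<Sum>\<chi>\<in>chars. \<Sum>\<chi>'\<in>chars. XX \<chi> \<chi>' * (\<chi>' a * cnj (\<chi> a))) / (NN * NN)"
    by (simp add: conv_eq 1 sum_divide_distrib)
  also have "(\<Sum>a\<in>UNIV. \<Sum>\<chi>\<in>chars. \<Sum>\<chi>'\<in>chars. XX \<chi> \<chi>' * (\<chi>' a * cnj (\<chi> a)))
      = (\<Sum>\<chi>\<in>chars. \<Sum>a\<in>UNIV. \<Sum>\<chi>'\<in>chars. XX \<chi> \<chi>' * (\<chi>' a * cnj (\<chi> a)))"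
    by (rule sum.swap)
  also have "\<dots> = (\<Sum>\<chi>\<in>chars. \<Sum>\<chi>'\<in>chars. \<Sum>a\<in>UNIV. XX \<chi> \<chi>' * (\<chi>' a * cnj (\<chi> a)))"
    by (rule sum.cong[OF refl]) (rule sum.swap)
  also have "\<dots> = (\<Sum>\<chi>\<in>chars. \<Sum>\<chi>'\<in>chars. XX \<chi> \<chi>' * (if \<chi>' = \<chi> then NN else 0))"
    by (intro sum.cong refl) (simp add: sum_distrib_left[symmetric] orth NN_def)
  also have "\<dots> = (\<Sum>\<chi>\<in>chars. XX \<chi> \<chi> * NN)"
    by (rule sum.cong[OF refl]) (simp add: chars_finite if_distrib cong: if_cong)
  finally have eq: "conv (psi l) (psi m) c = (\<Sum>\<chi>\<in>chars. XX \<chi> \<chi> * NN) / (NN * NN)" .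
  have "(\<Sum>\<chi>\<in>chars. XX \<chi> \<chi> * NN) / (NN * NN) = (\<Sum>\<chi>\<in>chars. l \<chi> * m \<chi> * cnj (\<chi> c)) / NN"
    using NN0 by (simp add: XX_def sum_distrib_right[symmetric])
  moreover have "psi (\<lambda>\<chi>. l \<chi> * m \<chi>) c = (\<Sum>\<chi>\<in>chars. l \<chi> * m \<chi> * cnj (\<chi> c)) / NN"
    by (simp add: psi_def)
  ultimately show "conv (psi l) (psi m) c = psi (\<lambda>\<chi>. l \<chi> * m \<chi>) c" using eq by simp
qed

lemma psi_star: "star (psi l) = psi (\<lambda>\<chi>. cnj (l \<chi>))"
proof
  fix a
  have "cnj NN = NN" by (simp add: NN_def)
  then show "star (psi l) a = psi (\<lambda>\<chi>. cnj (l \<chi>)) a"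
    unfolding star_def psi_def by (simp add: ch_inv)
qed

definition unitc :: "(('x \<Rightarrow> complex) \<Rightarrow> complex) \<Rightarrow> bool" where
  "unitc l \<longleftrightarrow> (\<forall>\<chi>\<in>chars. cmod (l \<chi>) = 1)"

lemma psi_phase: "unitc l \<Longrightarrow> is_phase mZ eta (psi l)"
proof -
  assume u: "unitc l"
  have "psi (\<lambda>\<chi>. cnj (l \<chi>) * l \<chi>) = psi (\<lambda>\<chi>. 1)"
    by (rule psi_cong) (use u in \<open>simp add: unitc_def cnj_unit\<close>)
  then show ?thesis unfolding is_phase_iff psi_star psi_conv by (simp add: psi_one)
qed

lemma pc_psi_carrier: "unitc l \<Longrightarrow> phase_class (psi l) \<in> carrier PG"
  using psi_phase by (simp add: PG_carrier)

lemma PG_cm: "comm_monoid PG" using PG_comm comm_group_def by blast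

lemma pc_psi_natpow: "phase_class (psi l) [^]\<^bsub>PG\<^esub> (k::nat) = phase_class (psi (\<lambda>\<chi>. l \<chi> ^ k))"
proof (induction k)
  case 0
  then show ?case by (simp add: PG_one psi_one)
next
  case (Suc k)
  then show ?case by (simp add: PG_mult psi_conv mult.commute)
qed

lemma unitc_pow: "unitc l \<Longrightarrow> unitc (\<lambda>\<chi>. l \<chi> ^ k)"
  by (simp add: unitc_def norm_power)

lemma pc_psi_intpow: assumes u: "unitc l"
  shows "phase_class (psi l) [^]\<^bsub>PG\<^esub> (k::int) = phase_class (psi (\<lambda>\<chi>. l \<chi> powi k))"
proof (cases "k < 0")
  case True
  have "phase_class (psi l) [^]\<^bsub>PG\<^esub> k = inv\<^bsub>PG\<^esub> (phase_class (psi (\<lambda>\<chi>. l \<chi> ^ nat (- k))))"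
    using True by (simp del: pow_nat add: int_pow_def2 pc_psi_natpow)
  also have "\<dots> = phase_class (psi (\<lambda>\<chi>. cnj (l \<chi> ^ nat (- k))))"
    using PG_inv[OF psi_phase[OF unitc_pow[OF u]]] by (simp add: psi_star)
  also have "psi (\<lambda>\<chi>. cnj (l \<chi> ^ nat (- k))) = psi (\<lambda>\<chi>. l \<chi> powi k)"
  proof (rule psi_cong)
    fix \<chi> assume "\<chi> \<in> chars"
    then have "cnj (l \<chi>) = inverse (l \<chi>)" using u by (simp add: unitc_def cnj_inverse)
    then show "cnj (l \<chi> ^ nat (- k)) = l \<chi> powi k"
      using True by (simp add: power_int_def power_inverse)
  qed
  finally show ?thesis .
next
  case False
  then have "phase_class (psi l) [^]\<^bsub>PG\<^esub> k = phase_class (psi (\<lambda>\<chi>. l \<chi> ^ nat k))"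
    by (simp del: pow_nat add: int_pow_def2 pc_psi_natpow)
  also have "(\<lambda>\<chi>. l \<chi> ^ nat k) = (\<lambda>\<chi>. l \<chi> powi k)" using False by (simp add: power_int_def)
  finally show ?thesis .
qed

lemma pc_psi_finprod:
  assumes A: "finite A" and u: "\<forall>r\<in>A. unitc (F r)"
  shows "finprod PG (\<lambda>r. phase_class (psi (F r))) A = phase_class (psi (\<lambda>\<chi>. \<Prod>r\<in>A. F r \<chi>))"
  using A u
proof (induction A rule: finite_induct)
  case empty
  then show ?case by (simp add: comm_monoid.finprod_empty[OF PG_cm] PG_one psi_one)
next
  case (insert e A)
  have "finprod PG (\<lambda>r. phase_class (psi (F r))) (insert e A)
      = phase_class (psi (F e)) \<otimes>\<^bsub>PG\<^esub> finprod PG (\<lambda>r. phase_class (psi (F r))) A"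
    using insert.prems insert.hyps
    by (intro comm_monoid.finprod_insert[OF PG_cm]) (auto simp: pc_psi_carrier)
  also have "\<dots> = phase_class (psi (\<lambda>\<chi>. \<Prod>r\<in>insert e A. F r \<chi>))"
    using insert by (simp add: PG_mult psi_conv)
  finally show ?case .
qed

end



theorem mainTheorem1:
  fixes G :: "('x::finite, 'b) monoid_scheme"
    and M S :: nat and n :: "nat \<Rightarrow> nat \<Rightarrow> int" and a :: "nat \<Rightarrow> 'x"
  assumes "comm_group G" and "carrier G = UNIV"
    and "\<forall>s<S. a s \<in> carrier G"
    and "consistent_system G M S n a"
    and "\<not> has_solution G M S n a"
  shows "\<exists>(m :: 'x \<Rightarrow> 'x \<Rightarrow> 'x \<Rightarrow> complex) (\<eta> :: 'x \<Rightarrow> complex) f.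
           qs_comm_dagger_frobenius m \<eta> \<and>
           comm_group (phase_group m \<eta>) \<and>
           strongly_complementary m \<eta> \<and>
           subgroup (phase_class ` range ket) (phase_group m \<eta>) \<and>
           f \<in> iso G ((phase_group m \<eta>)\<lparr>carrier := phase_class ` range ket\<rparr>) \<and>
           has_solution (phase_group m \<eta>) M S n (\<lambda>s. f (a s))"
proof -
  interpret fab G by (intro fab.intro fab_axioms.intro assms(1,2))
  have cons_ch: "\<forall>\<chi>\<in>chars. \<exists>y. (\<forall>r. cmod (y r) = 1) \<and>
      (\<forall>s\<in>{..<S}. (\<Prod>r\<in>{..<M}. y r powi n s r) = \<chi> (a s))"
  proof
    fix \<chi> assume c: "\<chi> \<in> chars"
    have u: "\<forall>s\<in>{..<S}. cmod (\<chi> (a s)) = 1" using chD(2)[OF c] by simp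
    have cc: "\<forall>cf. condV {..<S} {..<M} n cf \<longrightarrow> (\<Prod>s\<in>{..<S}. \<chi> (a s) powi cf s) = 1"
    proof (intro allI impI)
      fix cf assume cV: "condV {..<S} {..<M} n cf"
      show "(\<Prod>s\<in>{..<S}. \<chi> (a s) powi cf s) = 1"
      proof (cases "S = 0")
        case True then show ?thesis by simp
      next
        case False
        have "finprod G (\<lambda>j. a (id j) [^]\<^bsub>G\<^esub> cf j) {..<S} = \<one>\<^bsub>G\<^esub>"
        proof (rule assms(4)[unfolded consistent_system_def, rule_format, of S id cf])
          show "1 \<le> S" using False by simp
          show "\<And>j. j < S \<Longrightarrow> id j < S" by simp
          show "\<And>r. r < M \<Longrightarrow> (\<Sum>j<S. cf j * n (id j) r) = 0" using cV by (simp add: condV_def)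
        qed
        then have "\<chi> (finprod G (\<lambda>j. a j [^]\<^bsub>G\<^esub> cf j) {..<S}) = 1" by (simp add: ch_one[OF c])
        then show ?thesis by (simp add: ch_finprod[OF c] ch_intpow[OF c])
      qed
    qed
    show "\<exists>y. (\<forall>r. cmod (y r) = 1) \<and> (\<forall>s\<in>{..<S}. (\<Prod>r\<in>{..<M}. y r powi n s r) = \<chi> (a s))"
      by (rule solve[OF finite_lessThan finite_lessThan u cc])
  qed
  then obtain Y where Y: "\<forall>\<chi>\<in>chars. (\<forall>r. cmod (Y \<chi> r) = 1) \<and>
      (\<forall>s\<in>{..<S}. (\<Prod>r\<in>{..<M}. Y \<chi> r powi n s r) = \<chi> (a s))"
    by (metis bchoice)
  define L where "L = (\<lambda>r \<chi>. Y \<chi> r)"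
  have uL: "\<And>r. unitc (L r)" using Y by (simp add: unitc_def L_def)
  have uLp: "\<And>r k. unitc (\<lambda>\<chi>. L r \<chi> powi k)" using uL by (simp add: unitc_def norm_power_int)
  have sol: "has_solution PG M S n (\<lambda>s. phase_class (ket (a s)))"
    unfolding has_solution_def
  proof (intro exI[of _ "\<lambda>r. phase_class (psi (L r))"] conjI allI impI)
    fix r show "phase_class (psi (L r)) \<in> carrier PG" by (rule pc_psi_carrier[OF uL])
  next
    fix s assume s: "s < S"
    have "finprod PG (\<lambda>r. phase_class (psi (L r)) [^]\<^bsub>PG\<^esub> n s r) {..<M}
        = finprod PG (\<lambda>r. phase_class (psi (\<lambda>\<chi>. L r \<chi> powi n s r))) {..<M}"
      by (simp add: pc_psi_intpow[OF uL])
    also have "\<dots> = phase_class (psi (\<lambda>\<chi>. \<Prod>r\<in>{..<M}. L r \<chi> powi n s r))"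
      by (rule pc_psi_finprod) (simp_all add: uLp)
    also have "psi (\<lambda>\<chi>. \<Prod>r\<in>{..<M}. L r \<chi> powi n s r) = psi (\<lambda>\<chi>. \<chi> (a s))"
      by (rule psi_cong) (use Y s in \<open>simp add: L_def\<close>)
    also have "\<dots> = ket (a s)" by (rule psi_ket)
    finally show "finprod PG (\<lambda>r. phase_class (psi (L r)) [^]\<^bsub>PG\<^esub> n s r) {..<M} = phase_class (ket (a s))" .
  qed
  show ?thesis
    apply (rule exI[of _ mZ], rule exI[of _ eta], rule exI[of _ "\<lambda>g. phase_class (ket g)"])
    using qs PG_comm sc K_sub f_iso sol unfolding K_def by (intro conjI)
qed


end
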